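(* Let $\alpha,\beta$ be words over $X$ such that $\alpha\beta$ has no repeated letters, $|\alpha|$ is even, and $|\beta|=2n$ with $n\ge1$. Then $$f[\alpha]\,f[\alpha\beta]^{\,n-1}=\sum s(\beta,x_1y_1\ldots x_ny_n)\,f[(\alpha\beta)\setminus x_1y_1]\,f[(\alpha\beta)\setminus x_2y_2]\cdots f[(\alpha\beta)\setminus x_ny_n].$$ The sum is over all perfect matchings $\{x_1,y_1\},\ldots,\{x_n,y_n\}$ of the set of letters of $\beta$, each matching counted once.
   Context: Setting. Let $X$ be a set and $R$ a commutative ring. Let $f$ assign to each ordered pair $(x,y)\in X\times X$ an element $f[xy]\in R$, subject to $f[xy]=-f[yx]$ and $f[xx]=0$ for all $x,y\in X$. Words. A word is a finite sequence of elements (letters) of $X$. Concatenation is written by juxtaposition, $\epsilon$ is the empty word, and $|\alpha|$ is the length of $\alpha$. For words $\alpha,\beta$, the word $\alpha\setminus\beta$ is obtained from $\alpha$ by deleting every letter that occurs in $\beta$. Sign. For words $\alpha,\beta$, set $s(\alpha,\beta)=0$ if $\alpha$ or $\beta$ has a repeated letter, or if $\beta$ contains a letter not in $\alpha$. Otherwise $s(\alpha,\beta)\in\{\pm1\}$ is the sign of the permutation that rearranges $\alpha$ into the word $\beta(\alpha\setminus\beta)$. Pfaffian. Let $\alpha=x_1\ldots x_{2n}$ be a word with distinct letters. Then $$f[\alpha]=\sum s(\alpha,y_1\ldots y_{2n})\,f[y_1y_2]\cdots f[y_{2n-1}y_{2n}],$$ where the sum is over the $(2n-1)(2n-3)\cdots1$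 partitions of $\{x_1,\ldots,x_{2n}\}$ into pairs $\{y_1,y_2\},\ldots,\{y_{2n-1},y_{2n}\}$. Each term does not depend on the order in which the pairs or their elements are listed. Further conventions: $f[\epsilon]=1$; $f[\alpha]=0$ if $\alpha$ has a repeated letter; and $f[\alpha]=0$ if $|\alpha|$ is odd. *)

theory Defs
  imports "HOL-Combinatorics.Permutations"
begin

definition wminus :: "'a list \<Rightarrow> 'a list \<Rightarrow> 'a list" where
  "wminus \<alpha> \<beta> = filter (\<lambda>c. c \<notin> set \<beta>) \<alpha>"

definition wsign :: "'a list \<Rightarrow> 'a list \<Rightarrow> 'r::comm_ring_1" where
  "wsign \<alpha> \<beta> =
     (if \<not> distinct \<alpha> \<or> \<not> distinct \<beta> \<or> \<not> set \<beta> \<subseteq> set \<alpha> then 0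
      else of_int (sign (THE p. p permutes {..<length \<alpha>} \<and>
                               permute_list p \<alpha> = \<beta> @ wminus \<alpha> \<beta>)))"

definition perfect_matchings :: "'a set \<Rightarrow> 'a set set set" where
  "perfect_matchings S = {M. (\<forall>e\<in>M. card e = 2) \<and> \<Union>M = S \<and>
                             (\<forall>e\<in>M. \<forall>e'\<in>M. e \<noteq> e' \<longrightarrow> e \<inter> e' = {})}"

definition precedes :: "'a list \<Rightarrow> 'a \<Rightarrow> 'a \<Rightarrow> bool" where
  "precedes w x y \<longleftrightarrow> (\<exists>i j. i < j \<and> j < length w \<and> w ! i = x \<and> w ! j = y)"

definition listing :: "'a list \<Rightarrow> 'a set set \<Rightarrow> ('a \<times> 'a) list" where
  "listing w M = (SOME ps. distinct ps \<and> set (map (\<lambda>(x,y). {x,y}) ps) = M \<and>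
                           (\<forall>(x,y)\<in>set ps. precedes w x y))"

definition flat :: "('a \<times> 'a) list \<Rightarrow> 'a list" where
  "flat ps = concat (map (\<lambda>(x,y). [x,y]) ps)"

definition pf :: "('a \<Rightarrow> 'a \<Rightarrow> 'r::comm_ring_1) \<Rightarrow> 'a list \<Rightarrow> 'r" where
  "pf f \<alpha> =
     (if \<alpha> = [] then 1
      else if \<not> distinct \<alpha> \<or> odd (length \<alpha>) then 0
      else (\<Sum>M\<in>perfect_matchings (set \<alpha>).
              wsign \<alpha> (flat (listing \<alpha> M)) *
              prod_list (map (\<lambda>(x,y). f x y) (listing \<alpha> M))))"

end

theory Submission
  imports Defs
begin


definition dl :: "nat \<Rightarrow> 'a list \<Rightarrow> 'a list" where
  "dl i w = take i w @ drop (Suc i) w"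

lemma length_dl: "i < length w \<Longrightarrow> length (dl i w) = length w - 1"
  by (auto simp: dl_def)
lemma length_dl_le: "length (dl i w) \<le> length w" by (auto simp: dl_def)
lemma dl_0_Cons[simp]: "dl 0 (y # w) = w" by (simp add: dl_def)
lemma dl_Suc_Cons[simp]: "dl (Suc i) (y # w) = y # dl i w" by (simp add: dl_def)
lemma nth_dl: "i < length w \<Longrightarrow> k < length w - 1 \<Longrightarrow> dl i w ! k = (if k < i then w ! k else w ! Suc k)"
  by (auto simp: dl_def nth_append min_def)

lemma dl_comm: assumes "a < b" "b < length w" shows "dl a (dl b w) = dl (b - 1) (dl a w)"
  by (rule nth_equalityI) (use assms in \<open>auto simp: length_dl nth_dl\<close>)

function pfr :: "('a \<Rightarrow> 'a \<Rightarrow> 'r::comm_ring_1) \<Rightarrow> 'a list \<Rightarrow> 'r" where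
  "pfr f [] = 1"
| "pfr f (x # w) = (\<Sum>i<length w. (-1)^i * f x (w!i) * pfr f (dl i w))"
  by pat_completeness auto
termination by (relation "measure (\<lambda>(f,w). length w)") (auto simp: dl_def)

declare pfr.simps(2)[simp del]

lemma triangle_swap:
  "(\<Sum>i<(n::nat). \<Sum>k<i. G i k) = (\<Sum>k<n. \<Sum>i\<in>{k<..<n}. G i k :: 'r::comm_monoid_add)"
proof (induction n)
  case 0 then show ?case by simp
next
  case (Suc n)
  have e: "{k<..<Suc n} = insert n {k<..<n}" if "k < n" for k using that by auto
  have em: "{n<..<Suc n} = {}" by auto
  have "(\<Sum>k<Suc n. \<Sum>i\<in>{k<..<Suc n}. G i k) = (\<Sum>k<n. \<Sum>i\<in>{k<..<Suc n}. G i k)"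
    by (simp add: em)
  also have "\<dots> = (\<Sum>k<n. (\<Sum>i\<in>{k<..<n}. G i k) + G n k)"
    by (rule sum.cong) (auto simp: e add.commute)
  finally show ?case using Suc by (simp add: sum.distrib)
qed

definition S2 :: "('a \<Rightarrow> 'a \<Rightarrow> 'a list \<Rightarrow> 'r::comm_ring_1) \<Rightarrow> 'a list \<Rightarrow> 'r" where
  "S2 h w = (\<Sum>i<length w. \<Sum>k<length w - 1. (-1)^(i+k) * h (w!i) (dl i w ! k) (dl k (dl i w)))"

lemma S2_tri: "S2 h w = (\<Sum>i<length w. \<Sum>j\<in>{i<..<length w}.
    (-1)^(i+j) * (h (w!j) (w!i) (dl i (dl j w)) - h (w!i) (w!j) (dl i (dl j w))))"
proof -
  define n where "n = length w"
  define F where "F i k = (-1)^(i+k) * h (w!i) (dl i w ! k) (dl k (dl i w))" for i k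
  define G where "G i k = (-1)^(i+k) * h (w!i) (w!k) (dl k (dl i w))" for i k
  define H where "H i j = (-1)^(i+j) * h (w!i) (w!j) (dl i (dl j w))" for i j
  have inner: "(\<Sum>k<n - 1. F i k) = (\<Sum>k<i. G i k) - (\<Sum>j\<in>{i<..<n}. H i j)" if i: "i < n" for i
  proof -
    have e: "{..<n-1} = {..<i} \<union> {i..<n-1}" using i by auto
    have "(\<Sum>k<n - 1. F i k) = (\<Sum>k<i. F i k) + (\<Sum>k\<in>{i..<n-1}. F i k)"
      unfolding e by (rule sum.union_disjoint) auto
    moreover have "(\<Sum>k<i. F i k) = (\<Sum>k<i. G i k)"
    proof (rule sum.cong)
      fix k assume "k \<in> {..<i}"
      then have "k < i" by simp
      then show "F i k = G i k" using i unfolding F_def G_def n_def by (simp add: nth_dl)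
    qed simp
    moreover have "(\<Sum>k\<in>{i..<n-1}. F i k) = - (\<Sum>j\<in>{i<..<n}. H i j)"
    proof -
      have "{i<..<n} = Suc ` {i..<n-1}" using i
        by (auto simp: image_iff)
      then have "(\<Sum>j\<in>{i<..<n}. H i j) = (\<Sum>k\<in>{i..<n-1}. H i (Suc k))"
        using sum.reindex[of Suc "{i..<n-1}" "H i"] by simp
      also have "\<dots> = (\<Sum>k\<in>{i..<n-1}. - F i k)"
      proof (rule sum.cong)
        fix k assume "k \<in> {i..<n-1}"
        then have k: "i \<le> k" "k < n - 1" by auto
        have 1: "dl i w ! k = w ! Suc k" using i k unfolding n_def by (simp add: nth_dl)
        have 2: "dl i (dl (Suc k) w) = dl k (dl i w)" using dl_comm[of i "Suc k" w] i k unfolding n_def by simp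
        show "H i (Suc k) = - F i k" unfolding H_def F_def 1 2 by simp
      qed simp
      finally show ?thesis by (simp add: sum_negf)
    qed
    ultimately show ?thesis by simp
  qed
  have "S2 h w = (\<Sum>i<n. \<Sum>k<n - 1. F i k)"
    unfolding S2_def n_def F_def by simp
  also have "\<dots> = (\<Sum>i<n. (\<Sum>k<i. G i k) - (\<Sum>j\<in>{i<..<n}. H i j))"
    by (rule sum.cong) (use inner in auto)
  also have "\<dots> = (\<Sum>i<n. \<Sum>k<i. G i k) - (\<Sum>i<n. \<Sum>j\<in>{i<..<n}. H i j)"
    by (simp add: sum_subtractf)
  also have "(\<Sum>i<n. \<Sum>k<i. G i k) = (\<Sum>k<n. \<Sum>i\<in>{k<..<n}. G i k)"
    by (rule triangle_swap)
  also have "(\<Sum>k<n. \<Sum>i\<in>{k<..<n}. G i k) - (\<Sum>i<n. \<Sum>j\<in>{i<..<n}. H i j)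
     = (\<Sum>i<n. \<Sum>j\<in>{i<..<n}. G j i - H i j)"
    by (simp add: sum_subtractf)
  also have "\<dots> = (\<Sum>i<n. \<Sum>j\<in>{i<..<n}.
    (-1)^(i+j) * (h (w!j) (w!i) (dl i (dl j w)) - h (w!i) (w!j) (dl i (dl j w))))"
    unfolding G_def H_def by (simp add: right_diff_distrib add.commute)
  finally show ?thesis unfolding n_def .
qed

lemma S2_swap: "S2 h w = - S2 (\<lambda>p q r. h q p r) w"
  unfolding S2_tri by (simp add: sum_negf[symmetric] algebra_simps)

lemma S2_sym: assumes "\<And>p q r. h p q r = h q p r" shows "S2 h w = 0"
  unfolding S2_tri by (simp add: assms)

lemma sum_lessThan_add: "(\<Sum>i<m+(n::nat). g i) = (\<Sum>i<m. g i) + (\<Sum>i<n. g (m+i) :: 'r::comm_monoid_add)"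
  by (induction n) (simp_all add: add_ac)

lemma dl_append1: "i < length a \<Longrightarrow> dl i (a @ b) = dl i a @ b"
  by (simp add: dl_def)
lemma dl_append2: "dl (length a + i) (a @ b) = a @ dl i b"
  by (simp add: dl_def)
lemma dl_append2': "dl (i + length a) (a @ b) = a @ dl i b"
  by (simp add: dl_def)

lemma pfr_odd: "odd (length w) \<Longrightarrow> pfr f w = 0"
proof (induction "length w" arbitrary: w rule: less_induct)
  case less
  then obtain x w' where w: "w = x # w'" by (cases w) auto
  have "pfr f (dl i w') = 0" if "i < length w'" for i
    using less that w by (auto simp: length_dl)
  then show ?case unfolding w pfr.simps by simp
qed

lemma pfr_Cons_Cons: "pfr f (x # y # w) = f x y * pfr f w - (\<Sum>i<length w. (-1)^i * f x (w!i) * pfr f (y # dl i w))"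
  unfolding pfr.simps(2)[of f x] length_Cons sum.lessThan_Suc_shift
  by (simp add: sum_negf del: sum.lessThan_Suc)

lemma pfr_Cons_Cons_S2: "pfr f (x # y # w) = f x y * pfr f w - S2 (\<lambda>p q r. f x p * f y q * pfr f r) w"
proof -
  have "(\<Sum>i<length w. (-1)^i * f x (w!i) * pfr f (y # dl i w)) = S2 (\<lambda>p q r. f x p * f y q * pfr f r) w"
    unfolding S2_def
  proof (rule sum.cong)
    fix i assume "i \<in> {..<length w}"
    then have l: "length (dl i w) = length w - 1" by (simp add: length_dl)
    show "(-1)^i * f x (w!i) * pfr f (y # dl i w) = (\<Sum>k<length w - 1. (-1)^(i+k) * (f x (w!i) * f y (dl i w ! k) * pfr f (dl k (dl i w))))"
      unfolding pfr.simps(2)[of f y] l sum_distrib_left by (rule sum.cong) (simp_all add: power_add ac_simps)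
  qed simp
  then show ?thesis by (simp add: pfr_Cons_Cons)
qed

lemma pfr_split: "pfr f (z # pre @ w) = (\<Sum>i<length pre. (-1)^i * (f z (pre!i) * pfr f (dl i pre @ w)))
   + (-1)^length pre * (\<Sum>i<length w. (-1)^i * (f z (w!i) * pfr f (pre @ dl i w)))"
  unfolding pfr.simps(2)[of f z] length_append sum_lessThan_add
  by (simp add: dl_append1 dl_append2 dl_append2' nth_append sum_distrib_left power_add ac_simps)

lemma sum_xy: "(\<Sum>i<length (x#y#post). (-1)^i * g ((x#y#post)!i) (dl i (x#y#post)))
   = g x (y#post) - g y (x#post) + (\<Sum>i<length post. (-1)^i * g (post!i) (x#y#dl i post) :: 'r::comm_ring_1)"
  unfolding length_Cons sum.lessThan_Suc_shift by (simp del: sum.lessThan_Suc)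

locale skew =
  fixes f :: "'a \<Rightarrow> 'a \<Rightarrow> 'r::comm_ring_1"
  assumes antisym: "\<And>x y. f x y = - f y x"
    and diag: "\<And>x. f x x = 0"
begin

lemma swap0: "pfr f (x # y # w) = - pfr f (y # x # w)"
proof -
  have "S2 (\<lambda>p q r. f x p * f y q * pfr f r) w = - S2 (\<lambda>p q r. f y p * f x q * pfr f r) w"
    by (subst S2_swap) (simp add: ac_simps)
  then show ?thesis unfolding pfr_Cons_Cons_S2 by (simp add: antisym[of y x])
qed

lemma dup0: "pfr f (x # x # w) = 0"
proof -
  have "S2 (\<lambda>p q r. f x p * f x q * pfr f r) w = 0"
    by (rule S2_sym) (simp add: ac_simps)
  then show ?thesis unfolding pfr_Cons_Cons_S2 by (simp add: diag)
qed

lemma swap: "pfr f (pre @ x # y # post) = - pfr f (pre @ y # x # post)"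
proof (induction "length pre" arbitrary: pre post rule: less_induct)
  case less
  show ?case
  proof (cases pre)
    case Nil show ?thesis unfolding Nil append_Nil by (rule swap0)
  next
    case (Cons z pre')
    define g where "g a r = f z a * pfr f (pre' @ r)" for a r
    define SA where "SA w = (\<Sum>i<length pre'. (-1)^i * (f z (pre'!i) * pfr f (dl i pre' @ w)))" for w
    have split: "pfr f (z # pre' @ w) = SA w + (-1)^length pre' * (\<Sum>i<length w. (-1)^i * g (w!i) (dl i w))" for w
      unfolding g_def SA_def by (rule pfr_split)
    have A: "SA (x # y # post) = - SA (y # x # post)"
      unfolding SA_def sum_negf[symmetric]
    proof (rule sum.cong)
      fix i assume "i \<in> {..<length pre'}"
      then have "length (dl i pre') < length pre" using Cons by (simp add: length_dl)
      then have "pfr f (dl i pre' @ x # y # post) = - pfr f (dl i pre' @ y # x # post)"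
        using less by blast
      then show "(-1)^i * (f z (pre'!i) * pfr f (dl i pre' @ x # y # post)) = - ((-1)^i * (f z (pre'!i) * pfr f (dl i pre' @ y # x # post)))"
        by simp
    qed simp
    have B: "(\<Sum>i<length post. (-1)^i * g (post!i) (x # y # dl i post))
       = - (\<Sum>i<length post. (-1)^i * g (post!i) (y # x # dl i post))"
      unfolding sum_negf[symmetric]
    proof (rule sum.cong)
      fix i
      have "pfr f (pre' @ x # y # dl i post) = - pfr f (pre' @ y # x # dl i post)"
        using less Cons by simp
      then show "(-1)^i * g (post!i) (x # y # dl i post) = - ((-1)^i * g (post!i) (y # x # dl i post))"
        unfolding g_def by simp
    qed simp
    have e1: "pfr f (pre @ x # y # post) = SA (x # y # post) + (-1)^length pre' * (g x (y#post) - g y (x#post) + (\<Sum>i<length post. (-1)^i * g (post!i) (x#y#dl i post)))"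
      unfolding Cons append_Cons split sum_xy ..
    have e2: "pfr f (pre @ y # x # post) = SA (y # x # post) + (-1)^length pre' * (g y (x#post) - g x (y#post) + (\<Sum>i<length post. (-1)^i * g (post!i) (y#x#dl i post)))"
      unfolding Cons append_Cons split sum_xy ..
    show ?thesis unfolding e1 e2 A B by (simp add: algebra_simps)
  qed
qed

lemma dup: "pfr f (pre @ x # x # post) = 0"
proof (induction "length pre" arbitrary: pre post rule: less_induct)
  case less
  show ?case
  proof (cases pre)
    case Nil then show ?thesis by (simp add: dup0)
  next
    case (Cons z pre')
    define g where "g a r = f z a * pfr f (pre' @ r)" for a r
    define SA where "SA w = (\<Sum>i<length pre'. (-1)^i * (f z (pre'!i) * pfr f (dl i pre' @ w)))" for w
    have split: "pfr f (z # pre' @ w) = SA w + (-1)^length pre' * (\<Sum>i<length w. (-1)^i * g (w!i) (dl i w))" for w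
      unfolding g_def SA_def by (rule pfr_split)
    have A: "SA (x # x # post) = 0"
      unfolding SA_def
    proof (rule sum.neutral, rule ballI)
      fix i assume "i \<in> {..<length pre'}"
      then have "length (dl i pre') < length pre" using Cons by (simp add: length_dl)
      then have "pfr f (dl i pre' @ x # x # post) = 0"
        using less by blast
      then show "(-1)^i * (f z (pre'!i) * pfr f (dl i pre' @ x # x # post)) = 0"
        by simp
    qed
    have B: "(\<Sum>i<length post. (-1)^i * g (post!i) (x # x # dl i post)) = 0"
    proof (rule sum.neutral, rule ballI)
      fix i
      have "pfr f (pre' @ x # x # dl i post) = 0"
        using less Cons by simp
      then show "(-1)^i * g (post!i) (x # x # dl i post) = 0"
        unfolding g_def by simp
    qed
    have "pfr f (pre @ x # x # post) = SA (x # x # post) + (-1)^length pre' * (g x (x#post) - g x (x#post) + (\<Sum>i<length post. (-1)^i * g (post!i) (x#x#dl i post)))"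
      unfolding Cons append_Cons split sum_xy ..
    then show ?thesis unfolding A B by simp
  qed
qed

lemma move: "pfr f (pre @ x # m @ post) = (-1)^length m * pfr f (pre @ m @ x # post)"
proof (induction m arbitrary: pre)
  case Nil then show ?case by simp
next
  case (Cons c m)
  have "pfr f (pre @ x # c # m @ post) = - pfr f ((pre @ [c]) @ x # m @ post)"
    using swap[of pre x c "m @ post"] by simp
  also have "\<dots> = - ((-1)^length m * pfr f ((pre @ [c]) @ m @ x # post))"
    using Cons.IH[of "pre @ [c]"] by simp
  finally show ?case by simp
qed

lemma dup_any: "x \<in> set v \<Longrightarrow> pfr f (pre @ x # v) = 0"
proof -
  assume "x \<in> set v"
  then obtain m post where v: "v = m @ x # post" by (meson split_list)
  have "pfr f (pre @ x # m @ x # post) = (-1)^length m * pfr f (pre @ m @ x # x # post)" by (rule move)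
  also have "pfr f (pre @ m @ x # x # post) = 0" using dup[of "pre @ m" x post] by (simp only: append_assoc)
  finally show ?thesis unfolding v by simp
qed

lemma nondistinct: "\<not> distinct w \<Longrightarrow> pfr f w = 0"
proof -
  assume "\<not> distinct w"
  from not_distinct_decomp[OF this] obtain a x b c where w: "w = a @ [x] @ b @ [x] @ c" by blast
  have "pfr f (a @ x # (b @ x # c)) = 0" by (rule dup_any) simp
  then show ?thesis by (simp add: w)
qed


end

definition LL :: "('a \<Rightarrow> 'a \<Rightarrow> 'r::comm_ring_1) \<Rightarrow> 'a list \<Rightarrow> 'a list \<Rightarrow> 'r" where
  "LL f u v = (\<Sum>i<length u. (-1)^i * pfr f (dl i u) * pfr f (u!i # v))"

lemma pfr_single[simp]: "pfr f [a] = 0"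
  by (simp add: pfr.simps(2))

lemma LL_Cons1: "LL f (a # u) v = pfr f u * pfr f (a # v) + (\<Sum>k<length u. (-1)^k * f a (u!k) * LL f (dl k u) v)"
proof -
  define h1 where "h1 p q r = f a q * pfr f r * pfr f (p # v)" for p q r
  have "LL f (a # u) v = pfr f u * pfr f (a # v) + (\<Sum>i<length u. (-1)^(Suc i) * pfr f (a # dl i u) * pfr f (u!i # v))"
    unfolding LL_def length_Cons sum.lessThan_Suc_shift by (simp del: sum.lessThan_Suc)
  also have "(\<Sum>i<length u. (-1)^(Suc i) * pfr f (a # dl i u) * pfr f (u!i # v)) = - S2 h1 u"
  proof -
    have pt: "(-1)^(Suc i) * pfr f (a # dl i u) * pfr f (u!i # v) = - (\<Sum>k<length u - 1. (-1)^(i+k) * h1 (u!i) (dl i u ! k) (dl k (dl i u)))"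
      if "i < length u" for i
    proof -
      have l: "length (dl i u) = length u - 1" using that by (simp add: length_dl)
      show ?thesis
        unfolding pfr.simps(2)[of f a] l h1_def sum_distrib_left sum_distrib_right sum_negf[symmetric]
        by (rule sum.cong) (simp_all add: power_add ac_simps)
    qed
    have "(\<Sum>i<length u. (-1)^(Suc i) * pfr f (a # dl i u) * pfr f (u!i # v)) = (\<Sum>i<length u. - (\<Sum>k<length u - 1. (-1)^(i+k) * h1 (u!i) (dl i u ! k) (dl k (dl i u))))"
      by (rule sum.cong[OF refl], rule pt, simp)
    then show ?thesis by (simp add: S2_def sum_negf)
  qed
  also have "- S2 h1 u = S2 (\<lambda>p q r. h1 q p r) u" by (subst S2_swap) simp
  also have "\<dots> = (\<Sum>k<length u. (-1)^k * f a (u!k) * LL f (dl k u) v)"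
    unfolding S2_def
  proof (rule sum.cong)
    fix i assume "i \<in> {..<length u}"
    then have l: "length (dl i u) = length u - 1" by (simp add: length_dl)
    show "(\<Sum>k<length u - 1. (-1)^(i+k) * h1 (dl i u ! k) (u!i) (dl k (dl i u))) = (-1)^i * f a (u!i) * LL f (dl i u) v"
      unfolding LL_def l h1_def sum_distrib_left
      by (rule sum.cong) (simp_all add: power_add ac_simps)
  qed simp
  finally show ?thesis .
qed

context skew
begin

lemma LL_Cons2: "LL f v (a # u) = - pfr f u * pfr f (a # v) + (\<Sum>k<length u. (-1)^k * f a (u!k) * LL f v (dl k u))"
proof -
  have e: "pfr f (v!j # a # u) = - (f a (v!j) * pfr f u) + (\<Sum>k<length u. (-1)^k * f a (u!k) * pfr f (v!j # dl k u))" for j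
    using swap0[of "v!j" a u] pfr_Cons_Cons[of f a "v!j" u] by simp
  have "LL f v (a # u) = (\<Sum>j<length v. (-1)^j * pfr f (dl j v) * (- (f a (v!j) * pfr f u)))
      + (\<Sum>j<length v. \<Sum>k<length u. (-1)^j * pfr f (dl j v) * ((-1)^k * f a (u!k) * pfr f (v!j # dl k u)))"
    unfolding LL_def e by (simp only: distrib_left sum.distrib sum_distrib_left)
  also have "(\<Sum>j<length v. (-1)^j * pfr f (dl j v) * (- (f a (v!j) * pfr f u))) = - pfr f u * pfr f (a # v)"
    unfolding pfr.simps(2)[of f a] sum_distrib_left sum_negf[symmetric]
    by (rule sum.cong) (simp_all add: ac_simps)
  also have "(\<Sum>j<length v. \<Sum>k<length u. (-1)^j * pfr f (dl j v) * ((-1)^k * f a (u!k) * pfr f (v!j # dl k u)))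
     = (\<Sum>k<length u. (-1)^k * f a (u!k) * LL f v (dl k u))"
    unfolding LL_def sum_distrib_left
    by (subst sum.swap) (rule sum.cong, simp, rule sum.cong, simp_all add: ac_simps)
  finally show ?thesis .
qed

lemma U: "LL f u v + LL f v u = 0"
proof (induction "length u" arbitrary: u v rule: less_induct)
  case less
  show ?case
  proof (cases u)
    case Nil
    show ?thesis unfolding Nil LL_def by simp
  next
    case (Cons a u')
    have "LL f (dl k u') v + LL f v (dl k u') = 0" if "k < length u'" for k
      using less that Cons by (simp add: length_dl)
    then have "(\<Sum>k<length u'. (-1)^k * f a (u'!k) * LL f (dl k u') v) + (\<Sum>k<length u'. (-1)^k * f a (u'!k) * LL f v (dl k u')) = 0"
      unfolding sum.distrib[symmetric] distrib_left[symmetric]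
      by (intro sum.neutral) (simp add: mult.assoc[symmetric] distrib_left[symmetric])
    then show ?thesis unfolding Cons LL_Cons1 LL_Cons2 by (simp add: algebra_simps)
  qed
qed

end


lemma dl_filter: "distinct xs \<Longrightarrow> i < length xs \<Longrightarrow> dl i xs = filter (\<lambda>z. z \<noteq> xs!i) xs"
proof (induction xs arbitrary: i)
  case Nil then show ?case by simp
next
  case (Cons a xs)
  show ?case
  proof (cases i)
    case 0
    have "filter (\<lambda>z. z \<noteq> a) xs = xs" using Cons.prems by (intro filter_True) auto
    then show ?thesis using 0 by simp
  next
    case (Suc k)
    then have "a \<noteq> xs ! k" using Cons.prems by (auto simp: nth_mem)
    then show ?thesis using Cons Suc by simp
  qed
qed

lemma set_dl: "distinct xs \<Longrightarrow> i < length xs \<Longrightarrow> set (dl i xs) = set xs - {xs!i}"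
  by (auto simp: dl_filter)

lemma distinct_dl: "distinct xs \<Longrightarrow> distinct (dl i xs)"
  by (simp add: dl_def set_take_disj_set_drop_if_distinct)

lemma takeWhile_nth_distinct: "distinct xs \<Longrightarrow> i < length xs \<Longrightarrow> takeWhile (\<lambda>z. z \<noteq> xs!i) xs = take i xs"
proof (induction xs arbitrary: i)
  case Nil then show ?case by simp
next
  case (Cons a xs)
  show ?case
  proof (cases i)
    case 0 then show ?thesis by simp
  next
    case (Suc k)
    then have "a \<noteq> xs ! k" using Cons.prems by (auto simp: nth_mem)
    then show ?thesis using Cons Suc by simp
  qed
qed

lemma length_takeWhile_nth: "distinct xs \<Longrightarrow> i < length xs \<Longrightarrow> length (takeWhile (\<lambda>z. z \<noteq> xs!i) xs) = i"
  by (simp add: takeWhile_nth_distinct)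

lemma filter_takeWhile_comm:
  "(\<And>x. x \<in> set xs \<Longrightarrow> \<not> P x \<Longrightarrow> Q x) \<Longrightarrow> filter P (takeWhile Q xs) = takeWhile Q (filter P xs)"
  by (induction xs) auto

lemma length_filter_split:
  "length (filter P xs) = length (filter (\<lambda>x. P x \<and> Q x) xs) + length (filter (\<lambda>x. P x \<and> \<not> Q x) xs)"
  by (induction xs) auto

lemma sum_reindex_sub:
  fixes F :: "nat \<Rightarrow> 'r::comm_monoid_add"
  assumes dV: "distinct V" and dB: "distinct B" and sub: "set B \<subseteq> set V"
    and zero: "\<And>i. i < length V \<Longrightarrow> V!i \<notin> set B \<Longrightarrow> F i = 0"
  shows "(\<Sum>i<length V. F i) = (\<Sum>j<length B. F (length (takeWhile (\<lambda>z. z \<noteq> B!j) V)))"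
proof -
  define idx where "idx j = length (takeWhile (\<lambda>z. z \<noteq> B!j) V)" for j
  have idx_lt: "idx j < length V" if "j < length B" for j
  proof -
    have "B!j \<in> set V" using sub that nth_mem by blast
    then show ?thesis unfolding idx_def by (induction V) auto
  qed
  have idx_nth: "V ! idx j = B ! j" if "j < length B" for j
    using nth_length_takeWhile[of "\<lambda>z. z \<noteq> B!j" V] idx_lt[OF that] unfolding idx_def by simp
  have inj: "inj_on idx {..<length B}"
  proof (rule inj_onI)
    fix j1 j2 assume j: "j1 \<in> {..<length B}" "j2 \<in> {..<length B}" "idx j1 = idx j2"
    then have "B!j1 = B!j2" using idx_nth by (metis lessThan_iff)
    then show "j1 = j2" using nth_eq_iff_index_eq[OF dB] j by simp
  qed
  have img: "idx ` {..<length B} = {i. i < length V \<and> V!i \<in> set B}"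
  proof
    show "idx ` {..<length B} \<subseteq> {i. i < length V \<and> V!i \<in> set B}"
      using idx_lt idx_nth by auto
  next
    show "{i. i < length V \<and> V!i \<in> set B} \<subseteq> idx ` {..<length B}"
    proof
      fix i assume "i \<in> {i. i < length V \<and> V!i \<in> set B}"
      then have i: "i < length V" "V!i \<in> set B" by auto
      then obtain j where j: "j < length B" "B!j = V!i" by (metis in_set_conv_nth)
      have "idx j = i" unfolding idx_def j(2) using length_takeWhile_nth[OF dV i(1)] .
      then show "i \<in> idx ` {..<length B}" using j by auto
    qed
  qed
  have "(\<Sum>i<length V. F i) = (\<Sum>i\<in>{i. i < length V \<and> V!i \<in> set B}. F i)"
    by (rule sum.mono_neutral_right) (auto intro: zero)
  also have "\<dots> = (\<Sum>j<length B. F (idx j))"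
    unfolding img[symmetric] by (rule sum.reindex[OF inj, unfolded comp_def])
  finally show ?thesis unfolding idx_def .
qed

context skew
begin

lemma move_in:
  assumes "distinct C" "x \<in> set C" "\<not> Q x"
  shows "pfr f (pre @ x # filter Q C) = (-1)^(length (filter Q (takeWhile (\<lambda>z. z \<noteq> x) C))) * pfr f (pre @ filter (\<lambda>z. Q z \<or> z = x) C)"
  using assms
proof (induction C arbitrary: pre)
  case Nil then show ?case by simp
next
  case (Cons c C)
  show ?case
  proof (cases "c = x")
    case True
    then have "filter (\<lambda>z. Q z \<or> z = x) C = filter Q C" using Cons.prems by (auto intro: filter_cong)
    then show ?thesis using True Cons.prems by simp
  next
    case False
    then have x: "x \<in> set C" using Cons.prems by simp
    have IH: "pfr f (pre' @ x # filter Q C) = (-1)^(length (filter Q (takeWhile (\<lambda>z. z \<noteq> x) C))) * pfr f (pre' @ filter (\<lambda>z. Q z \<or> z = x) C)" for pre'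
      using Cons.IH[of pre'] Cons.prems x by simp
    show ?thesis
    proof (cases "Q c")
      case True
      have "pfr f (pre @ x # filter Q (c # C)) = - pfr f ((pre @ [c]) @ x # filter Q C)"
        using swap[of pre x c "filter Q C"] True by simp
      also have "\<dots> = - ((-1)^(length (filter Q (takeWhile (\<lambda>z. z \<noteq> x) C))) * pfr f ((pre @ [c]) @ filter (\<lambda>z. Q z \<or> z = x) C))"
        by (simp only: IH)
      finally show ?thesis using True False by simp
    next
      case False
      then show ?thesis using IH \<open>c \<noteq> x\<close> by simp
    qed
  qed
qed


lemma neg_one_sq: "(-1::'r::comm_ring_1)^n * (-1)^n = 1"
  by (induction n) auto

lemma Qrel:
  assumes dC: "distinct C" and fb: "filter (\<lambda>z. z \<in> set (b # B)) C = b # B"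
  shows "(\<Sum>j<length B. (-1)^j * pfr f (wminus C [b, B!j]) * pfr f (wminus C (dl j B)))
         = pfr f (wminus C (b # B)) * pfr f C"
proof -
  have dbB: "distinct (b # B)" using fb distinct_filter[OF dC] by metis
  then have bB: "b \<notin> set B" and dB: "distinct B" by auto
  have sub: "set (b # B) \<subseteq> set C" using fb by (metis filter_is_subset)
  define W where "W = filter (\<lambda>z. z \<notin> set B) C"
  define V where "V = filter (\<lambda>z. z \<noteq> b) C"
  have dW: "distinct W" and dV: "distinct V" unfolding W_def V_def using dC by auto
  have UU: "LL f W V + LL f V W = 0" by (rule U)
  define T where "T = takeWhile (\<lambda>z. z \<noteq> b) C"
  have "filter (\<lambda>z. z \<in> set (b # B)) T = takeWhile (\<lambda>z. z \<noteq> b) (filter (\<lambda>z. z \<in> set (b # B)) C)"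
    unfolding T_def by (rule filter_takeWhile_comm) auto
  also have "\<dots> = []" unfolding fb by simp
  finally have Tdisj: "\<And>z. z \<in> set T \<Longrightarrow> z \<notin> set (b # B)"
    by (metis (mono_tags, lifting) filter_empty_conv)
  define ib where "ib = length (takeWhile (\<lambda>z. z \<noteq> b) W)"
  have "takeWhile (\<lambda>z. z \<noteq> b) W = filter (\<lambda>z. z \<notin> set B) T"
    unfolding W_def T_def by (rule filter_takeWhile_comm[symmetric]) (use bB in auto)
  also have "\<dots> = T" using Tdisj by (intro filter_True) auto
  finally have ib_eq: "ib = length T" unfolding ib_def by simp
  have bW: "b \<in> set W" unfolding W_def using sub bB by auto
  have ib_lt: "ib < length W" unfolding ib_def using bW by (induction W) auto
  have Wib: "W ! ib = b" using nth_length_takeWhile[of "\<lambda>z. z \<noteq> b" W] ib_lt unfolding ib_def by simp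
  have part1: "LL f W V = (-1)^ib * pfr f (dl ib W) * pfr f (W!ib # V)"
  proof -
    have "LL f W V = (-1)^ib * pfr f (dl ib W) * pfr f (W!ib # V) + (\<Sum>i\<in>{..<length W} - {ib}. (-1)^i * pfr f (dl i W) * pfr f (W!i # V))"
      unfolding LL_def by (rule sum.remove) (use ib_lt in auto)
    also have "(\<Sum>i\<in>{..<length W} - {ib}. (-1)^i * pfr f (dl i W) * pfr f (W!i # V)) = 0"
    proof (rule sum.neutral, rule ballI)
      fix i assume i: "i \<in> {..<length W} - {ib}"
      then have "W!i \<noteq> b" using Wib nth_eq_iff_index_eq[OF dW, of i ib] ib_lt by auto
      moreover have "W!i \<in> set C" using i nth_mem[of i W] unfolding W_def by auto
      ultimately have "W!i \<in> set V" unfolding V_def by auto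
      then have "pfr f ([] @ W!i # V) = 0" by (rule dup_any)
      then show "(-1)^i * pfr f (dl i W) * pfr f (W!i # V) = 0" by simp
    qed
    finally show ?thesis by simp
  qed
  have dlW: "dl ib W = wminus C (b # B)"
  proof -
    have "dl ib W = filter (\<lambda>z. z \<noteq> b) W" using dl_filter[OF dW ib_lt] Wib by simp
    also have "\<dots> = wminus C (b # B)" unfolding W_def wminus_def by (auto intro: filter_cong)
    finally show ?thesis .
  qed
  have bV: "pfr f (b # V) = (-1)^(length T) * pfr f C"
  proof -
    have "pfr f ([] @ b # filter (\<lambda>z. z \<noteq> b) C) = (-1)^(length (filter (\<lambda>z. z \<noteq> b) (takeWhile (\<lambda>z. z \<noteq> b) C))) * pfr f ([] @ filter (\<lambda>z. z \<noteq> b \<or> z = b) C)"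
      by (rule move_in) (use dC sub in auto)
    moreover have "filter (\<lambda>z. z \<noteq> b) (takeWhile (\<lambda>z. z \<noteq> b) C) = T"
      unfolding T_def by (intro filter_True) (auto dest: set_takeWhileD)
    moreover have "filter (\<lambda>z. z \<noteq> b \<or> z = b) C = C" by (intro filter_True) auto
    ultimately show ?thesis unfolding V_def by simp
  qed
  have L1: "LL f W V = pfr f (wminus C (b # B)) * pfr f C"
  proof -
    have s: "(-1::'r)^length T * (-1)^length T = 1" by (rule neg_one_sq)
    have "LL f W V = (-1)^ib * pfr f (wminus C (b # B)) * ((-1)^length T * pfr f C)"
      by (simp only: part1 Wib dlW bV)
    also have "\<dots> = ((-1)^length T * (-1)^length T) * (pfr f (wminus C (b # B)) * pfr f C)"
      unfolding ib_eq by (simp only: ac_simps)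
    finally show ?thesis unfolding s by simp
  qed
  have subBV: "set B \<subseteq> set V" unfolding V_def using sub bB by auto
  have "LL f V W = (\<Sum>j<length B. (\<lambda>i. (-1)^i * pfr f (dl i V) * pfr f (V!i # W)) (length (takeWhile (\<lambda>z. z \<noteq> B!j) V)))"
    unfolding LL_def
  proof (rule sum_reindex_sub[OF dV dB subBV])
    fix i assume i: "i < length V" "V!i \<notin> set B"
    then have "V!i \<in> set W" unfolding W_def V_def using nth_mem[of i V] unfolding V_def by auto
    then have "pfr f ([] @ V!i # W) = 0" by (rule dup_any)
    then show "(-1)^i * pfr f (dl i V) * pfr f (V!i # W) = 0" by simp
  qed
  also have "\<dots> = (\<Sum>j<length B. - ((-1)^j * pfr f (wminus C [b, B!j]) * pfr f (wminus C (dl j B))))"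
  proof (rule sum.cong[OF refl])
    fix j assume "j \<in> {..<length B}"
    then have j: "j < length B" by simp
    define x where "x = B!j"
    have xB: "x \<in> set B" unfolding x_def using j by simp
    have xb: "x \<noteq> b" using xB bB by auto
    define idx where "idx = length (takeWhile (\<lambda>z. z \<noteq> x) V)"
    define Tj where "Tj = takeWhile (\<lambda>z. z \<noteq> x) C"
    have xV: "x \<in> set V" using xB subBV by auto
    have idx_lt: "idx < length V" unfolding idx_def using xV by (induction V) auto
    have Vidx: "V ! idx = x" using nth_length_takeWhile[of "\<lambda>z. z \<noteq> x" V] idx_lt unfolding idx_def by simp
    have dlV: "dl idx V = wminus C [b, x]"
    proof -
      have "dl idx V = filter (\<lambda>z. z \<noteq> x) V" using dl_filter[OF dV idx_lt] Vidx by simp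
      also have "\<dots> = wminus C [b, x]" unfolding V_def wminus_def by (auto intro: filter_cong)
      finally show ?thesis .
    qed
    have xW: "pfr f (x # W) = (-1)^(length (filter (\<lambda>z. z \<notin> set B) Tj)) * pfr f (wminus C (dl j B))"
    proof -
      have "pfr f ([] @ x # filter (\<lambda>z. z \<notin> set B) C) = (-1)^(length (filter (\<lambda>z. z \<notin> set B) (takeWhile (\<lambda>z. z \<noteq> x) C))) * pfr f ([] @ filter (\<lambda>z. z \<notin> set B \<or> z = x) C)"
        by (rule move_in) (use dC sub xB in auto)
      moreover have "filter (\<lambda>z. z \<notin> set B \<or> z = x) C = wminus C (dl j B)"
        unfolding wminus_def set_dl[OF dB j] x_def by (auto intro: filter_cong)
      ultimately show ?thesis unfolding W_def Tj_def by simp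
    qed
    have idx_eq: "idx = length (filter (\<lambda>z. z \<noteq> b) Tj)"
    proof -
      have "takeWhile (\<lambda>z. z \<noteq> x) V = filter (\<lambda>z. z \<noteq> b) Tj"
        unfolding V_def Tj_def by (rule filter_takeWhile_comm[symmetric]) (use xb in auto)
      then show ?thesis unfolding idx_def by simp
    qed
    have fTj: "filter (\<lambda>z. z \<in> set (b # B)) Tj = b # take j B"
    proof -
      have "filter (\<lambda>z. z \<in> set (b # B)) Tj = takeWhile (\<lambda>z. z \<noteq> x) (filter (\<lambda>z. z \<in> set (b # B)) C)"
        unfolding Tj_def by (rule filter_takeWhile_comm) (use xB in auto)
      also have "\<dots> = b # takeWhile (\<lambda>z. z \<noteq> x) B" unfolding fb using xb by simp
      also have "takeWhile (\<lambda>z. z \<noteq> x) B = take j B" unfolding x_def by (rule takeWhile_nth_distinct[OF dB j])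
      finally show ?thesis .
    qed
    define a where "a = length (filter (\<lambda>z. z \<notin> set (b # B)) Tj)"
    have c1: "length (filter (\<lambda>z. z \<noteq> b) Tj) = j + a"
    proof -
      have "length (filter (\<lambda>z. z \<noteq> b) Tj) = length (filter (\<lambda>z. z \<noteq> b \<and> z \<in> set (b # B)) Tj) + length (filter (\<lambda>z. z \<noteq> b \<and> z \<notin> set (b # B)) Tj)"
        by (rule length_filter_split)
      also have "filter (\<lambda>z. z \<noteq> b \<and> z \<in> set (b # B)) Tj = filter (\<lambda>z. z \<noteq> b) (filter (\<lambda>z. z \<in> set (b # B)) Tj)"
        by (simp add: filter_filter conj_commute)
      also have "\<dots> = take j B" unfolding fTj using bB by (auto intro: filter_True dest: in_set_takeD)
      also have "filter (\<lambda>z. z \<noteq> b \<and> z \<notin> set (b # B)) Tj = filter (\<lambda>z. z \<notin> set (b # B)) Tj"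
        by (auto intro: filter_cong)
      finally show ?thesis unfolding a_def using j by simp
    qed
    have c2: "length (filter (\<lambda>z. z \<notin> set B) Tj) = Suc a"
    proof -
      have "length (filter (\<lambda>z. z \<notin> set B) Tj) = length (filter (\<lambda>z. z \<notin> set B \<and> z \<in> set (b # B)) Tj) + length (filter (\<lambda>z. z \<notin> set B \<and> z \<notin> set (b # B)) Tj)"
        by (rule length_filter_split)
      also have "filter (\<lambda>z. z \<notin> set B \<and> z \<in> set (b # B)) Tj = filter (\<lambda>z. z \<notin> set B) (filter (\<lambda>z. z \<in> set (b # B)) Tj)"
        by (simp add: filter_filter conj_commute)
      also have "\<dots> = [b]" unfolding fTj using bB by (auto intro: filter_False dest: in_set_takeD)
      also have "filter (\<lambda>z. z \<notin> set B \<and> z \<notin> set (b # B)) Tj = filter (\<lambda>z. z \<notin> set (b # B)) Tj"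
        by (auto intro: filter_cong)
      finally show ?thesis unfolding a_def by simp
    qed
    have sgn: "(-1::'r)^idx * (-1)^(length (filter (\<lambda>z. z \<notin> set B) Tj)) = - ((-1)^j)"
    proof -
      have "(-1::'r)^a * (-1)^a = 1" by (rule neg_one_sq)
      then show ?thesis unfolding idx_eq c1 c2 power_add by (simp add: algebra_simps)
    qed
    show "(\<lambda>i. (-1)^i * pfr f (dl i V) * pfr f (V!i # W)) (length (takeWhile (\<lambda>z. z \<noteq> B!j) V))
        = - ((-1)^j * pfr f (wminus C [b, B!j]) * pfr f (wminus C (dl j B)))"
    proof -
      have "(\<lambda>i. (-1)^i * pfr f (dl i V) * pfr f (V!i # W)) (length (takeWhile (\<lambda>z. z \<noteq> B!j) V))
          = (-1)^idx * pfr f (dl idx V) * pfr f (V!idx # W)" unfolding idx_def x_def by simp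
      also have "\<dots> = (-1)^idx * pfr f (wminus C [b, x]) * ((-1)^(length (filter (\<lambda>z. z \<notin> set B) Tj)) * pfr f (wminus C (dl j B)))"
        by (simp only: Vidx dlV xW)
      also have "\<dots> = ((-1)^idx * (-1)^(length (filter (\<lambda>z. z \<notin> set B) Tj))) * (pfr f (wminus C [b, x]) * pfr f (wminus C (dl j B)))"
        by (simp only: ac_simps)
      also have "\<dots> = - ((-1)^j * pfr f (wminus C [b, B!j]) * pfr f (wminus C (dl j B)))"
        unfolding sgn x_def by simp
      finally show ?thesis .
    qed
  qed
  finally have L2: "LL f V W = - (\<Sum>j<length B. (-1)^j * pfr f (wminus C [b, B!j]) * pfr f (wminus C (dl j B)))"
    by (simp add: sum_negf)
  show ?thesis using UU unfolding L1 L2 by (simp add: algebra_simps)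
qed


lemma filter_dl:
  assumes dC: "distinct C" and fb: "filter (\<lambda>z. z \<in> set (b # B)) C = b # B" and j: "j < length B"
  shows "filter (\<lambda>z. z \<in> set (dl j B)) C = dl j B"
proof -
  have dbB: "distinct (b # B)" using fb distinct_filter[OF dC] by metis
  then have bB: "b \<notin> set B" and dB: "distinct B" by auto
  have sdl: "set (dl j B) = set B - {B!j}" by (rule set_dl[OF dB j])
  have "filter (\<lambda>z. z \<in> set (dl j B)) C = filter (\<lambda>z. z \<in> set (dl j B)) (filter (\<lambda>z. z \<in> set (b # B)) C)"
    unfolding filter_filter by (rule filter_cong) (auto simp: sdl)
  also have "\<dots> = filter (\<lambda>z. z \<noteq> B!j) B" unfolding fb using bB sdl by (auto intro: filter_cong)
  also have "\<dots> = dl j B" using dl_filter[OF dB j] by simp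
  finally show ?thesis .
qed

lemma Tthm:
  assumes "distinct C" "filter (\<lambda>z. z \<in> set \<beta>) C = \<beta>" "length \<beta> = 2*n" "n \<ge> 1"
  shows "pfr f (wminus C \<beta>) * pfr f C ^ (n-1) = pfr (\<lambda>x y. pfr f (wminus C [x,y])) \<beta>"
  using assms
proof (induction n arbitrary: \<beta>)
  case 0 then show ?case by simp
next
  case (Suc m)
  define g where "g x y = pfr f (wminus C [x,y])" for x y
  show ?case
  proof (cases "m = 0")
    case True
    then obtain b b' where \<beta>: "\<beta> = [b, b']" using Suc.prems(3)
      by (metis One_nat_def length_0_conv length_Suc_conv mult_1_right numeral_2_eq_2)
    show ?thesis unfolding \<beta> True by (simp add: pfr.simps(2))
  next
    case False
    then obtain b B where \<beta>: "\<beta> = b # B" using Suc.prems(3) by (cases \<beta>) auto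
    have lB: "length B = 2*m + 1" using Suc.prems(3) \<beta> by simp
    have fb: "filter (\<lambda>z. z \<in> set (b # B)) C = b # B" using Suc.prems(2) \<beta> by simp
    have IH: "pfr g (dl j B) = pfr f (wminus C (dl j B)) * pfr f C ^ (m - 1)" if j: "j < length B" for j
    proof -
      have "length (dl j B) = 2 * m" using j lB by (simp add: length_dl)
      then have "pfr f (wminus C (dl j B)) * pfr f C ^ (m - 1) = pfr (\<lambda>x y. pfr f (wminus C [x,y])) (dl j B)"
        using Suc.IH[of "dl j B"] Suc.prems(1) filter_dl[OF Suc.prems(1) fb j] False by simp
      then show ?thesis unfolding g_def by simp
    qed
    have "pfr g (b # B) = (\<Sum>j<length B. (-1)^j * g b (B!j) * pfr g (dl j B))"
      by (simp add: pfr.simps(2))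
    also have "\<dots> = (\<Sum>j<length B. pfr f C ^ (m - 1) * ((-1)^j * pfr f (wminus C [b, B!j]) * pfr f (wminus C (dl j B))))"
      by (rule sum.cong) (simp_all add: IH g_def ac_simps)
    also have "\<dots> = pfr f C ^ (m - 1) * (pfr f (wminus C (b # B)) * pfr f C)"
      unfolding sum_distrib_left[symmetric] Qrel[OF Suc.prems(1) fb] ..
    also have "\<dots> = pfr f (wminus C (b # B)) * pfr f C ^ m"
      using False by (cases m) (simp_all add: ac_simps)
    finally show ?thesis unfolding \<beta> g_def by simp
  qed
qed

end



lemma wsign_eq:
  assumes du: "distinct u" and p: "p permutes {..<length u}" and v: "permute_list p u = v"
  shows "wsign u v = of_int (sign p)"
proof -
  have dv: "distinct v" unfolding v[symmetric] using du p by (simp add: distinct_permute_list)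
  have sv: "set v = set u" unfolding v[symmetric] using p by (simp add: set_permute_list)
  have wm: "wminus u v = []" unfolding wminus_def sv by simp
  have uniq: "q = p" if q: "q permutes {..<length u}" "permute_list q u = v" for q
  proof
    fix i show "q i = p i"
    proof (cases "i < length u")
      case True
      have qi: "q i < length u" using permutes_in_image[OF q(1)] True by simp
      have pi: "p i < length u" using permutes_in_image[OF p] True by simp
      have "u ! q i = v ! i" using permute_list_nth[OF q(1) True] q(2) by simp
      moreover have "u ! p i = v ! i" using permute_list_nth[OF p True] v by simp
      ultimately have "u ! q i = u ! p i" by simp
      then show ?thesis using nth_eq_iff_index_eq[OF du qi pi] by simp
    next
      case False
      then show ?thesis using permutes_not_in[OF q(1)] permutes_not_in[OF p] by simp
    qed
  qed
  have "(THE p. p permutes {..<length u} \<and> permute_list p u = v @ wminus u v) = p"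
    unfolding wm append_Nil2
  proof (rule the_equality)
    show "p permutes {..<length u} \<and> permute_list p u = v" using p v by simp
  next
    fix q assume "q permutes {..<length u} \<and> permute_list q u = v"
    then show "q = p" using uniq by blast
  qed
  moreover have "\<not> (\<not> distinct u \<or> \<not> distinct v \<or> \<not> set v \<subseteq> set u)" using du dv sv by simp
  ultimately show ?thesis unfolding wsign_def by presburger
qed

lemma wsign_exists:
  assumes "distinct u" "mset v = mset u"
  obtains p where "p permutes {..<length u}" "permute_list p u = v" "wsign u v = of_int (sign p)"
proof -
  obtain p where p: "p permutes {..<length u}" "permute_list p u = v"
    using mset_eq_permutation[of v u] assms(2) by metis
  then show ?thesis using that wsign_eq[OF assms(1) p] by blast
qed

lemma wsign_comp:
  assumes du: "distinct u" and v: "mset v = mset u" and w: "mset w = mset u"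
  shows "wsign u w = wsign u v * (wsign v w :: 'r::comm_ring_1)"
proof -
  have dv: "distinct v" using du v by (metis distinct_count_atmost_1 count_mset_0_iff set_mset_mset)
  have lv: "length v = length u" using v by (metis size_mset)
  have mw: "mset w = mset v" using v w by simp
  obtain p where p: "p permutes {..<length u}" "permute_list p u = v" "wsign u v = (of_int (sign p) :: 'r)"
    by (rule wsign_exists[OF du v])
  obtain q where q: "q permutes {..<length v}" "permute_list q v = w" "wsign v w = (of_int (sign q) :: 'r)"
    by (rule wsign_exists[OF dv mw])
  have q': "q permutes {..<length u}" using q(1) lv by simp
  have pq: "p \<circ> q permutes {..<length u}" by (rule permutes_compose[OF q' p(1)])
  have "permute_list (p \<circ> q) u = w" using permute_list_compose[OF q', of p] p(2) q(2) by simp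
  then have "wsign u w = (of_int (sign (p \<circ> q)) :: 'r)" by (rule wsign_eq[OF du pq])
  also have "sign (p \<circ> q) = sign p * sign q"
    by (rule sign_compose) (use p(1) q' in \<open>auto intro: permutes_imp_permutation\<close>)
  finally show ?thesis using p(3) q(3) by simp
qed

lemma wsign_refl: "distinct u \<Longrightarrow> wsign u u = 1"
  using wsign_eq[of u id u] by (simp add: permutes_id)

lemma wsign_sq:
  assumes "distinct u" "mset v = mset u"
  shows "wsign u v * wsign u v = (1 :: 'r::comm_ring_1)"
proof -
  obtain p where "p permutes {..<length u}" "permute_list p u = v" "wsign u v = (of_int (sign p) :: 'r)"
    by (rule wsign_exists[OF assms])
  then show ?thesis by (simp flip: of_int_mult)
qed

lemma wsign_sym:
  assumes du: "distinct u" and v: "mset v = mset u"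
  shows "wsign v u = (wsign u v :: 'r::comm_ring_1)"
proof -
  have dv: "distinct v" using du v by (metis distinct_count_atmost_1 count_mset_0_iff set_mset_mset)
  have "wsign u u = wsign u v * (wsign v u :: 'r)" by (rule wsign_comp[OF du v]) simp
  then have e: "wsign u v * wsign v u = (1::'r)" using wsign_refl[OF du] by metis
  have "wsign v u = (wsign u v * wsign u v) * (wsign v u :: 'r)" unfolding wsign_sq[OF du v] by simp
  also have "\<dots> = wsign u v" using e by (metis mult.assoc mult.right_neutral)
  finally show ?thesis .
qed

lemma wsign_swap:
  assumes d: "distinct (pre @ a # b # post)"
  shows "wsign (pre @ a # b # post) (pre @ b # a # post) = (-1 :: 'r::comm_ring_1)"
proof -
  define k where "k = length pre"
  define u where "u = pre @ a # b # post"
  have t: "transpose k (Suc k) permutes {..<length u}"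
    by (rule permutes_swap_id) (auto simp: u_def k_def)
  have "permute_list (transpose k (Suc k)) u = pre @ b # a # post"
  proof (rule nth_equalityI)
    show "length (permute_list (transpose k (Suc k)) u) = length (pre @ b # a # post)" by (simp add: u_def)
  next
    fix i assume "i < length (permute_list (transpose k (Suc k)) u)"
    then have i: "i < length u" by simp
    have "permute_list (transpose k (Suc k)) u ! i = u ! transpose k (Suc k) i"
      by (rule permute_list_nth[OF t i])
    also have "\<dots> = (pre @ b # a # post) ! i"
      unfolding u_def k_def using i
      by (cases "i < length pre"; cases "i = length pre"; cases "i = Suc (length pre)")
         (auto simp: nth_append transpose_def nth_Cons' u_def)
    finally show "permute_list (transpose k (Suc k)) u ! i = (pre @ b # a # post) ! i" .
  qed
  then have "wsign u (pre @ b # a # post) = (of_int (sign (transpose k (Suc k))) :: 'r)"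
    by (rule wsign_eq[OF d[folded u_def] t])
  then show ?thesis unfolding u_def by (simp add: sign_swap_id)
qed

lemma wsign_shift:
  assumes d: "distinct (x # a)" and m: "mset b = mset a"
  shows "wsign (x # a) (x # b) = (wsign a b :: 'r::comm_ring_1)"
proof -
  have da: "distinct a" using d by simp
  obtain p where p: "p permutes {..<length a}" "permute_list p a = b" "wsign a b = (of_int (sign p) :: 'r)"
    by (rule wsign_exists[OF da m])
  define B where "B = Suc ` {..<length a}"
  define p' where "p' = (\<lambda>i. if i \<in> B then Suc (p (i - 1)) else i)"
  interpret pb: permutes_bij_finite p "{..<length a}" B Suc "\<lambda>i. i - 1" p'
    by unfold_locales (simp_all add: p B_def bij_betw_def p'_def)
  have pp: "p' permutes {..<length (x # a)}"
    using pb.permutes_p' by (rule permutes_subset) (auto simp: B_def)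
  have "permute_list p' (x # a) = x # b"
  proof (rule nth_equalityI)
    show "length (permute_list p' (x # a)) = length (x # b)" using p(2) by auto
  next
    fix i assume "i < length (permute_list p' (x # a))"
    then have i: "i < length (x # a)" by simp
    have "permute_list p' (x # a) ! i = (x # a) ! p' i" by (rule permute_list_nth[OF pp i])
    also have "\<dots> = (x # b) ! i"
    proof (cases i)
      case 0 then show ?thesis by (simp add: p'_def B_def)
    next
      case (Suc k)
      then have k: "k < length a" using i by simp
      then have "p' i = Suc (p k)" unfolding p'_def B_def Suc by auto
      then show ?thesis using Suc permute_list_nth[OF p(1) k] p(2) by simp
    qed
    finally show "permute_list p' (x # a) ! i = (x # b) ! i" .
  qed
  then have "wsign (x # a) (x # b) = (of_int (sign p') :: 'r)" by (rule wsign_eq[OF d pp])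
  also have "sign p' = sign p" by (rule pb.sign_p')
  finally show ?thesis using p(3) by simp
qed

lemma wsign_move:
  assumes d: "distinct (pre @ mid @ y # post)"
  shows "wsign (pre @ mid @ y # post) (pre @ y # mid @ post) = ((-1)^length mid :: 'r::comm_ring_1)"
  using d
proof (induction mid arbitrary: pre)
  case Nil then show ?case by (simp add: wsign_refl)
next
  case (Cons c mid)
  have IH: "wsign ((pre @ [c]) @ mid @ y # post) ((pre @ [c]) @ y # mid @ post) = ((-1)^length mid :: 'r)"
    using Cons.IH[of "pre @ [c]"] Cons.prems by simp
  have "wsign (pre @ c # mid @ y # post) (pre @ y # c # mid @ post)
      = wsign (pre @ c # mid @ y # post) (pre @ c # y # mid @ post) * (wsign (pre @ c # y # mid @ post) (pre @ y # c # mid @ post) :: 'r)"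
    by (rule wsign_comp) (use Cons.prems in auto)
  also have "wsign (pre @ c # y # mid @ post) (pre @ y # c # mid @ post) = (-1 :: 'r)"
    by (rule wsign_swap) (use Cons.prems in auto)
  finally show ?case using IH by simp
qed



definition valid :: "'a list \<Rightarrow> 'a set set \<Rightarrow> ('a \<times> 'a) list \<Rightarrow> bool" where
  "valid w M ps \<longleftrightarrow> distinct ps \<and> set (map (\<lambda>(x,y). {x,y}) ps) = M \<and> (\<forall>(x,y)\<in>set ps. precedes w x y)"

lemma precedes_neq: "distinct w \<Longrightarrow> precedes w a b \<Longrightarrow> a \<noteq> b"
  unfolding precedes_def using nth_eq_iff_index_eq by fastforce

lemma precedes_in: "precedes w a b \<Longrightarrow> a \<in> set w \<and> b \<in> set w"
  unfolding precedes_def by auto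

lemma precedes_asym: "distinct w \<Longrightarrow> precedes w a b \<Longrightarrow> \<not> precedes w b a"
proof
  assume d: "distinct w" and ab: "precedes w a b" and ba: "precedes w b a"
  from ab obtain i j where ij: "i < j" "j < length w" "w!i = a" "w!j = b" unfolding precedes_def by blast
  from ba obtain i' j' where ij': "i' < j'" "j' < length w" "w!i' = b" "w!j' = a" unfolding precedes_def by blast
  have "i = j'" using ij ij' nth_eq_iff_index_eq[OF d, of i j'] by simp
  moreover have "j = i'" using ij ij' nth_eq_iff_index_eq[OF d, of j i'] by simp
  ultimately show False using ij ij' by simp
qed

lemma precedes_total: "distinct w \<Longrightarrow> a \<in> set w \<Longrightarrow> b \<in> set w \<Longrightarrow> a \<noteq> b \<Longrightarrow> precedes w a b \<or> precedes w b a"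
proof -
  assume "distinct w" "a \<in> set w" "b \<in> set w" "a \<noteq> b"
  then obtain i j where "i < length w" "j < length w" "w!i = a" "w!j = b" "i \<noteq> j"
    by (metis in_set_conv_nth)
  then show ?thesis unfolding precedes_def by (cases "i < j") (auto, metis linorder_neqE_nat)
qed

lemma precedes_Cons0: "j < length w' \<Longrightarrow> precedes (x # w') x (w'!j)"
  unfolding precedes_def by (rule exI[of _ 0], rule exI[of _ "Suc j"]) simp

lemma precedes_dl: "precedes (dl j w') a b \<Longrightarrow> j < length w' \<Longrightarrow> precedes (x # w') a b"
proof -
  assume p: "precedes (dl j w') a b" and j: "j < length w'"
  then obtain i k where ik: "i < k" "k < length (dl j w')" "dl j w' ! i = a" "dl j w' ! k = b"
    unfolding precedes_def by blast
  have l: "length (dl j w') = length w' - 1" using j by (simp add: length_dl)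
  define m where "m i = Suc (if i < j then i else Suc i)" for i
  have "m i < m k" using ik(1) unfolding m_def by auto
  moreover have "m k < length (x # w')" using ik(2) l unfolding m_def by auto
  moreover have "(x # w') ! m i = a" using ik l j unfolding m_def by (auto simp: nth_dl split: if_splits)
  moreover have "(x # w') ! m k = b" using ik l j unfolding m_def by (auto simp: nth_dl split: if_splits)
  ultimately show ?thesis unfolding precedes_def by blast
qed

lemma pm_finite_blocks: "M \<in> perfect_matchings S \<Longrightarrow> e \<in> M \<Longrightarrow> e \<subseteq> S"
  unfolding perfect_matchings_def by auto

lemma pm_finite: "finite S \<Longrightarrow> finite (perfect_matchings S)"
proof -
  assume "finite S"
  moreover have "perfect_matchings S \<subseteq> Pow (Pow S)" unfolding perfect_matchings_def by auto
  ultimately show ?thesis by (meson finite_Pow_iff finite_subset)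
qed

lemma valid_exists:
  assumes d: "distinct w" and M: "M \<in> perfect_matchings (set w)"
  shows "\<exists>ps. valid w M ps"
proof -
  have fin: "finite M" using pm_finite[of "set w"] M
    by (metis List.finite_set Union_upper finite_Pow_iff finite_subset M pm_finite_blocks rev_finite_subset subsetI Pow_iff)
  obtain ms where ms: "set ms = M" "distinct ms" using finite_distinct_list[OF fin] by blast
  have ex: "\<exists>ab. e = {fst ab, snd ab} \<and> precedes w (fst ab) (snd ab)" if e: "e \<in> M" for e
  proof -
    have "card e = 2" using M e unfolding perfect_matchings_def by auto
    then obtain a b where ab: "e = {a,b}" "a \<noteq> b" by (meson card_2_iff)
    have "a \<in> set w" "b \<in> set w" using pm_finite_blocks[OF M e] ab by auto
    then have "precedes w a b \<or> precedes w b a" using precedes_total[OF d] ab by blast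
    then show ?thesis using ab by (metis fst_conv snd_conv insert_commute)
  qed
  define orient where "orient e = (SOME ab. e = {fst ab, snd ab} \<and> precedes w (fst ab) (snd ab))" for e
  have or: "e = {fst (orient e), snd (orient e)} \<and> precedes w (fst (orient e)) (snd (orient e))" if "e \<in> M" for e
    unfolding orient_def using someI_ex[OF ex[OF that]] .
  define ps where "ps = map orient ms"
  have "inj_on orient M"
    by (rule inj_onI) (metis or)
  then have "distinct ps" unfolding ps_def using ms by (simp add: distinct_map inj_on_subset)
  moreover have "set (map (\<lambda>(x,y). {x,y}) ps) = M"
  proof -
    have "(\<lambda>(x,y). {x,y}) (orient e) = e" if "e \<in> M" for e
      using or[OF that] by (simp add: case_prod_beta)
    then show ?thesis unfolding ps_def using ms by (auto simp: image_iff)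
  qed
  moreover have "\<forall>(x,y)\<in>set ps. precedes w x y"
    unfolding ps_def using ms or by (auto simp: case_prod_beta)
  ultimately show ?thesis unfolding valid_def by blast
qed

lemma listing_valid:
  assumes "distinct w" "M \<in> perfect_matchings (set w)"
  shows "valid w M (listing w M)"
  unfolding listing_def using someI_ex[OF valid_exists[OF assms, unfolded valid_def]] unfolding valid_def .


lemma neg_one_sq2: "(-1::'r::comm_ring_1)^n * (-1)^n = 1"
  by (induction n) auto

lemma flat_Nil[simp]: "flat [] = []" by (simp add: flat_def)
lemma flat_Cons[simp]: "flat ((a,b) # ps) = a # b # flat ps" by (simp add: flat_def)
lemma flat_append[simp]: "flat (xs @ ys) = flat xs @ flat ys" by (simp add: flat_def)
lemma set_flat: "set (flat ps) = \<Union> ((\<lambda>(x,y). {x,y}) ` set ps)"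
  by (induction ps) auto
lemma mset_flat: "mset (flat ps) = sum_mset (image_mset (\<lambda>(x,y). {#x,y#}) (mset ps))"
  by (induction ps) (auto simp: add_ac)
lemma mset_flat_perm: "mset qs = mset ps \<Longrightarrow> mset (flat qs) = mset (flat ps)"
  by (simp add: mset_flat)

lemma dist_mset: "mset ys = mset xs \<Longrightarrow> distinct xs \<Longrightarrow> distinct ys"
  using mset_eq_imp_distinct_iff by metis

lemma valid_set_eq_aux:
  assumes d: "distinct w" and ps: "valid w M ps" and qs: "valid w M qs" and p: "p \<in> set ps"
  shows "p \<in> set qs"
proof -
  obtain a b where pab: "p = (a,b)" by (cases p)
  have ab: "precedes w a b" using ps p pab unfolding valid_def by auto
  have "{a,b} \<in> M" using ps p pab unfolding valid_def by force
  then have "{a,b} \<in> set (map (\<lambda>(x,y). {x,y}) qs)" using qs unfolding valid_def by simp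
  then obtain c e where ce: "(c,e) \<in> set qs" "{a,b} = {c,e}" by auto
  have "precedes w c e" using qs ce unfolding valid_def by auto
  then have "a = c \<and> b = e" using ce(2) ab precedes_asym[OF d] by (auto simp: doubleton_eq_iff)
  then show ?thesis using ce pab by simp
qed

lemma valid_mset_eq:
  assumes d: "distinct w" and ps: "valid w M ps" and qs: "valid w M qs"
  shows "mset ps = mset qs"
proof -
  have "set ps = set qs" using valid_set_eq_aux[OF d ps qs] valid_set_eq_aux[OF d qs ps] by blast
  moreover have "distinct ps" "distinct qs" using ps qs unfolding valid_def by auto
  ultimately show ?thesis using set_eq_iff_mset_eq_distinct by blast
qed

lemma distinct_flat:
  "distinct ps \<Longrightarrow> (\<forall>(a,b)\<in>set ps. a \<noteq> b) \<Longrightarrow>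
   (\<forall>p\<in>set ps. \<forall>q\<in>set ps. p \<noteq> q \<longrightarrow> (\<lambda>(x,y). {x,y}) p \<inter> (\<lambda>(x,y). {x,y}) q = {}) \<Longrightarrow> distinct (flat ps)"
proof (induction ps)
  case Nil then show ?case by simp
next
  case (Cons p ps)
  obtain a b where p: "p = (a,b)" by (cases p)
  have "distinct (flat ps)" using Cons by auto
  moreover have "a \<noteq> b" using Cons.prems p by auto
  moreover have "a \<notin> set (flat ps)" "b \<notin> set (flat ps)"
  proof -
    have "{a,b} \<inter> (\<lambda>(x,y). {x,y}) q = {}" if "q \<in> set ps" for q
      using Cons.prems(3) that p Cons.prems(1) by (metis (no_types, lifting) case_prod_conv distinct.simps(2) list.set_intros)
    then show "a \<notin> set (flat ps)" "b \<notin> set (flat ps)" unfolding set_flat by blast+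
  qed
  ultimately show ?case using p by simp
qed

lemma valid_flat:
  assumes d: "distinct w" and M: "M \<in> perfect_matchings (set w)" and ps: "valid w M ps"
  shows "distinct (flat ps)" "mset (flat ps) = mset w"
proof -
  have blk: "(\<lambda>(x,y). {x,y}) ` set ps = M" using ps unfolding valid_def by simp
  have "distinct (flat ps)"
  proof (rule distinct_flat)
    show "distinct ps" using ps unfolding valid_def by simp
    show "\<forall>(a,b)\<in>set ps. a \<noteq> b"
    proof (clarify)
      fix a assume "(a,a) \<in> set ps"
      then have "precedes w a a" using ps unfolding valid_def by auto
      then show False using precedes_neq[OF d] by blast
    qed
    show "\<forall>p\<in>set ps. \<forall>q\<in>set ps. p \<noteq> q \<longrightarrow> (\<lambda>(x,y). {x,y}) p \<inter> (\<lambda>(x,y). {x,y}) q = {}"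
    proof (intro ballI impI)
      fix p q assume pq: "p \<in> set ps" "q \<in> set ps" "p \<noteq> q"
      obtain a b where p: "p = (a,b)" by (cases p)
      obtain c e where q: "q = (c,e)" by (cases q)
      have "precedes w a b" "precedes w c e" using ps pq p q unfolding valid_def by auto
      then have ne: "{a,b} \<noteq> {c,e}" using pq p q precedes_asym[OF d] by (auto simp: doubleton_eq_iff)
      have "{a,b} \<in> M" "{c,e} \<in> M" using blk pq p q by force+
      then show "(\<lambda>(x,y). {x,y}) p \<inter> (\<lambda>(x,y). {x,y}) q = {}"
        using M ne p q unfolding perfect_matchings_def by auto
    qed
  qed
  moreover have "set (flat ps) = set w"
    unfolding set_flat blk using M unfolding perfect_matchings_def by auto
  ultimately show "distinct (flat ps)" "mset (flat ps) = mset w"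
    using set_eq_iff_mset_eq_distinct d by blast+
qed

lemma flat_perm_sign:
  "distinct (flat ps) \<Longrightarrow> mset qs = mset ps \<Longrightarrow> wsign (flat ps) (flat qs) = (1::'r::comm_ring_1)"
proof (induction ps arbitrary: qs)
  case Nil then show ?case by (simp add: wsign_refl)
next
  case (Cons p ps)
  obtain a b where p: "p = (a,b)" by (cases p)
  have "p \<in> set qs" using Cons.prems(2) by (metis list.set_intros(1) set_mset_mset)
  then obtain q1 q2 where qs: "qs = q1 @ p # q2" by (meson split_list)
  have m: "mset ps = mset (q1 @ q2)" using Cons.prems(2) qs by simp
  define Q1 where "Q1 = flat q1"
  define Q2 where "Q2 = flat q2"
  define R where "R = flat ps"
  have dR: "distinct (a # b # R)" using Cons.prems(1) p R_def by simp
  have mR: "mset (Q1 @ Q2) = mset R" unfolding Q1_def Q2_def R_def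
    using mset_flat_perm[OF m[symmetric]] by simp
  have IH: "wsign R (Q1 @ Q2) = (1::'r)"
    using Cons.IH[of "q1 @ q2"] dR m unfolding R_def Q1_def Q2_def by simp
  have m1: "mset (a # b # Q1 @ Q2) = mset (a # b # R)" using mR by simp
  have m2: "mset (Q1 @ a # b # Q2) = mset (a # b # R)" using mR by simp
  have "wsign (a # b # R) (Q1 @ a # b # Q2) = wsign (a # b # R) (a # b # Q1 @ Q2) * (wsign (a # b # Q1 @ Q2) (Q1 @ a # b # Q2) :: 'r)"
    by (rule wsign_comp[OF dR m1 m2])
  also have "wsign (a # b # R) (a # b # Q1 @ Q2) = (wsign R (Q1 @ Q2) :: 'r)"
  proof -
    have s1: "wsign (a # b # R) (a # b # Q1 @ Q2) = (wsign (b # R) (b # Q1 @ Q2) :: 'r)"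
      by (rule wsign_shift) (use dR mR in auto)
    have s2: "wsign (b # R) (b # Q1 @ Q2) = (wsign R (Q1 @ Q2) :: 'r)"
      by (rule wsign_shift) (use dR mR in auto)
    show ?thesis using s1 s2 by (rule trans)
  qed
  also have "wsign (a # b # Q1 @ Q2) (Q1 @ a # b # Q2) = (1::'r)"
  proof -
    have d1: "distinct (Q1 @ a # b # Q2)" using dist_mset[OF m2 dR] .
    have s: "wsign (a # b # Q1 @ Q2) (Q1 @ a # b # Q2) = (wsign (Q1 @ a # b # Q2) (a # b # Q1 @ Q2) :: 'r)"
      by (rule wsign_sym[OF d1]) (simp add: add_ac)
    have "wsign (Q1 @ a # b # Q2) (a # b # Q1 @ Q2) = wsign (Q1 @ a # b # Q2) (a # Q1 @ b # Q2) * (wsign (a # Q1 @ b # Q2) (a # b # Q1 @ Q2) :: 'r)"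
      by (rule wsign_comp[OF d1]) (simp_all add: add_ac)
    also have "wsign (Q1 @ a # b # Q2) (a # Q1 @ b # Q2) = ((-1)^length Q1 :: 'r)"
      using wsign_move[of "[]" Q1 a "b # Q2"] d1 by simp
    also have "wsign (a # Q1 @ b # Q2) (a # b # Q1 @ Q2) = ((-1)^length Q1 :: 'r)"
      using wsign_move[of "[a]" Q1 b Q2] d1 by simp
    finally show ?thesis using s neg_one_sq2[of "length Q1", where 'r='r] by simp
  qed
  finally show ?case using IH qs p unfolding Q1_def Q2_def R_def by simp
qed


definition tm :: "('a \<Rightarrow> 'a \<Rightarrow> 'r::comm_ring_1) \<Rightarrow> 'a list \<Rightarrow> ('a \<times> 'a) list \<Rightarrow> 'r" where
  "tm h w ps = wsign w (flat ps) * prod_list (map (\<lambda>(x,y). h x y) ps)"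

lemma tm_invariant:
  assumes d: "distinct w" and M: "M \<in> perfect_matchings (set w)" and ps: "valid w M ps" and qs: "valid w M qs"
  shows "tm h w ps = tm h w qs"
proof -
  have m: "mset ps = mset qs" by (rule valid_mset_eq[OF d ps qs])
  have e1: "prod_list (map (\<lambda>(x,y). h x y) ps) = prod_list (map (\<lambda>(x,y). h x y) qs)"
    by (metis m mset_map prod_mset_prod_list)
  have e2: "wsign w (flat qs) = wsign w (flat ps)"
  proof -
    have w1: "wsign w (flat qs) = wsign w (flat ps) * wsign (flat ps) (flat qs)"
      by (rule wsign_comp[OF d]) (use valid_flat[OF d M ps] valid_flat[OF d M qs] in auto)
    have w2: "wsign (flat ps) (flat qs) = 1"
      by (rule flat_perm_sign) (use valid_flat[OF d M ps] m in auto)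
    show ?thesis unfolding w1 w2 by simp
  qed
  show ?thesis unfolding tm_def e1 e2 ..
qed

lemma pm_insert:
  assumes d: "distinct (x # w')" and j: "j < length w'" and M': "M' \<in> perfect_matchings (set (dl j w'))"
  shows "insert {x, w'!j} M' \<in> perfect_matchings (set (x # w'))" "{x, w'!j} \<notin> M'"
proof -
  have dw': "distinct w'" using d by simp
  have sdl: "set (dl j w') = set w' - {w'!j}" by (rule set_dl[OF dw' j])
  have xy: "x \<noteq> w'!j" using d j nth_mem by fastforce
  have blocks: "e \<subseteq> set w' - {w'!j}" if "e \<in> M'" for e using M' that sdl unfolding perfect_matchings_def by auto
  have xn: "x \<notin> set w'" using d by simp
  show "insert {x, w'!j} M' \<in> perfect_matchings (set (x # w'))"
    unfolding perfect_matchings_def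
  proof (intro CollectI conjI ballI impI)
    fix e assume "e \<in> insert {x, w'!j} M'"
    then show "card e = 2" using M' xy unfolding perfect_matchings_def by auto
  next
    show "\<Union> (insert {x, w'!j} M') = set (x # w')" using M' sdl j unfolding perfect_matchings_def by auto
  next
    fix e e' assume ee: "e \<in> insert {x, w'!j} M'" "e' \<in> insert {x, w'!j} M'" "e \<noteq> e'"
    show "e \<inter> e' = {}"
    proof (cases "e = {x, w'!j}")
      case True
      then have "e' \<in> M'" using ee by auto
      then show ?thesis using True blocks xn by blast
    next
      case False
      then have e: "e \<in> M'" using ee by auto
      show ?thesis
      proof (cases "e' = {x, w'!j}")
        case True then show ?thesis using e blocks xn by blast
      next
        case False
        then have "e' \<in> M'" using ee by auto
        then show ?thesis using e ee M' unfolding perfect_matchings_def by auto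
      qed
    qed
  qed
  show "{x, w'!j} \<notin> M'" using blocks xn by blast
qed

lemma pm_decomp:
  assumes d: "distinct (x # w')" and M: "M \<in> perfect_matchings (set (x # w'))"
  shows "\<exists>j<length w'. \<exists>M'\<in>perfect_matchings (set (dl j w')). M = insert {x, w'!j} M'"
proof -
  have dw': "distinct w'" using d by simp
  have xn: "x \<notin> set w'" using d by simp
  have "x \<in> \<Union>M" using M unfolding perfect_matchings_def by auto
  then obtain e where e: "e \<in> M" "x \<in> e" by blast
  have "card e = 2" using M e unfolding perfect_matchings_def by auto
  then obtain y where y: "e = {x, y}" "x \<noteq> y"
    using e(2) by (metis card_2_iff insert_commute insertE singletonD)
  have "y \<in> set (x # w')" using pm_finite_blocks[OF M e(1)] y by auto
  then have "y \<in> set w'" using y by simp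
  then obtain j where j: "j < length w'" "w'!j = y" by (metis in_set_conv_nth)
  define M' where "M' = M - {e}"
  have sdl: "set (dl j w') = set w' - {y}" using set_dl[OF dw' j(1)] j by simp
  have disj: "e' \<inter> e = {}" if "e' \<in> M'" for e'
    using that M e(1) unfolding M'_def perfect_matchings_def by auto
  have "M' \<in> perfect_matchings (set (dl j w'))"
    unfolding perfect_matchings_def
  proof (intro CollectI conjI ballI impI)
    fix e' assume "e' \<in> M'" then show "card e' = 2" using M unfolding M'_def perfect_matchings_def by auto
  next
    have U: "\<Union>M = set (x # w')" using M unfolding perfect_matchings_def by auto
    have "\<Union>M' = \<Union>M - e"
    proof
      show "\<Union>M' \<subseteq> \<Union>M - e" using disj unfolding M'_def by blast
      show "\<Union>M - e \<subseteq> \<Union>M'" unfolding M'_def by blast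
    qed
    then show "\<Union>M' = set (dl j w')" unfolding U sdl y(1) using xn y by auto
  next
    fix e1 e2 assume "e1 \<in> M'" "e2 \<in> M'" "e1 \<noteq> e2"
    then show "e1 \<inter> e2 = {}" using M unfolding M'_def perfect_matchings_def by auto
  qed
  moreover have "M = insert {x, w'!j} M'" unfolding M'_def using e y j by auto
  ultimately show ?thesis using j by blast
qed

lemma pm_split:
  assumes d: "distinct (x # w')"
  shows "perfect_matchings (set (x # w')) = (\<Union>j\<in>{..<length w'}. insert {x, w'!j} ` perfect_matchings (set (dl j w')))"
proof
  show "perfect_matchings (set (x # w')) \<subseteq> (\<Union>j\<in>{..<length w'}. insert {x, w'!j} ` perfect_matchings (set (dl j w')))"
    using pm_decomp[OF d] by blast
  show "(\<Union>j\<in>{..<length w'}. insert {x, w'!j} ` perfect_matchings (set (dl j w'))) \<subseteq> perfect_matchings (set (x # w'))"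
    using pm_insert(1)[OF d] by blast
qed

lemma sum_pm_split:
  assumes d: "distinct (x # w')"
  shows "(\<Sum>M\<in>perfect_matchings (set (x # w')). F M) =
         (\<Sum>j<length w'. \<Sum>M'\<in>perfect_matchings (set (dl j w')). F (insert {x, w'!j} M'))"
proof -
  have dw': "distinct w'" using d by simp
  have "(\<Sum>M\<in>perfect_matchings (set (x # w')). F M) = (\<Sum>j<length w'. \<Sum>M\<in>insert {x, w'!j} ` perfect_matchings (set (dl j w')). F M)"
    unfolding pm_split[OF d]
  proof (rule sum.UNION_disjoint[where I="{..<length w'}" and A="\<lambda>j. insert {x, w'!j} ` perfect_matchings (set (dl j w'))"])
    show "finite {..<length w'}" by simp
    show "\<forall>j\<in>{..<length w'}. finite (insert {x, w'!j} ` perfect_matchings (set (dl j w')))"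
      by (intro ballI finite_imageI pm_finite) simp
    show "\<forall>i\<in>{..<length w'}. \<forall>j\<in>{..<length w'}. i \<noteq> j \<longrightarrow>
        insert {x, w'!i} ` perfect_matchings (set (dl i w')) \<inter> insert {x, w'!j} ` perfect_matchings (set (dl j w')) = {}"
    proof (intro ballI impI)
      fix i j assume ij: "i \<in> {..<length w'}" "j \<in> {..<length w'}" "i \<noteq> j"
      show "insert {x, w'!i} ` perfect_matchings (set (dl i w')) \<inter> insert {x, w'!j} ` perfect_matchings (set (dl j w')) = {}"
      proof (rule ccontr)
        assume "\<not> ?thesis"
        then obtain M where Mi: "M \<in> insert {x, w'!i} ` perfect_matchings (set (dl i w'))"
          and Mj: "M \<in> insert {x, w'!j} ` perfect_matchings (set (dl j w'))" by blast
        obtain M0 where M0: "M = insert {x, w'!i} M0" "M0 \<in> perfect_matchings (set (dl i w'))"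
          using Mi by (rule imageE)
        have Mpm: "M \<in> perfect_matchings (set (x # w'))" unfolding M0(1) by (rule pm_insert(1)[OF d _ M0(2)]) (use ij in simp)
        have disj: "\<forall>e\<in>M. \<forall>e'\<in>M. e \<noteq> e' \<longrightarrow> e \<inter> e' = {}" using Mpm unfolding perfect_matchings_def by simp
        have mi: "{x, w'!i} \<in> M" using Mi by auto
        have mj: "{x, w'!j} \<in> M" using Mj by auto
        have ne: "{x, w'!i} \<noteq> {x, w'!j}"
        proof -
          have "w'!i \<noteq> w'!j" using ij nth_eq_iff_index_eq[OF dw', of i j] by simp
          moreover have "w'!i \<noteq> x" using d ij nth_mem[of i w'] by auto
          ultimately show ?thesis by (simp add: doubleton_eq_iff)
        qed
        have "{x, w'!i} \<inter> {x, w'!j} = {}" using bspec[OF bspec[OF disj mi] mj] ne by simp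
        then show False by simp
      qed
    qed
  qed
  also have "\<dots> = (\<Sum>j<length w'. \<Sum>M'\<in>perfect_matchings (set (dl j w')). F (insert {x, w'!j} M'))"
  proof (rule sum.cong[OF refl])
    fix j assume j: "j \<in> {..<length w'}"
    have "inj_on (insert {x, w'!j}) (perfect_matchings (set (dl j w')))"
    proof (rule inj_onI)
      fix M1 M2 assume M: "M1 \<in> perfect_matchings (set (dl j w'))" "M2 \<in> perfect_matchings (set (dl j w'))"
        "insert {x, w'!j} M1 = insert {x, w'!j} M2"
      have j': "j < length w'" using j by simp
      show "M1 = M2" using insert_ident[OF pm_insert(2)[OF d j' M(1)] pm_insert(2)[OF d j' M(2)]] M(3) by simp
    qed
    then show "(\<Sum>M\<in>insert {x, w'!j} ` perfect_matchings (set (dl j w')). F M) = (\<Sum>M'\<in>perfect_matchings (set (dl j w')). F (insert {x, w'!j} M'))"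
      by (rule sum.reindex[unfolded comp_def])
  qed
  finally show ?thesis .
qed


lemma tm_insert:
  assumes d: "distinct (x # w')" and j: "j < length w'" and M': "M' \<in> perfect_matchings (set (dl j w'))"
  shows "tm h (x # w') (listing (x # w') (insert {x, w'!j} M')) = (-1)^j * h x (w'!j) * tm h (dl j w') (listing (dl j w') M')"
proof -
  have dw': "distinct w'" using d by simp
  have ddl: "distinct (dl j w')" using dw' by (rule distinct_dl)
  define ps' where "ps' = listing (dl j w') M'"
  have vps': "valid (dl j w') M' ps'" unfolding ps'_def by (rule listing_valid[OF ddl M'])
  define ps where "ps = (x, w'!j) # ps'"
  have Mi: "insert {x, w'!j} M' \<in> perfect_matchings (set (x # w'))" by (rule pm_insert(1)[OF d j M'])
  have sdl: "set (dl j w') \<subseteq> set w'" using set_dl[OF dw' j] by blast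
  have v: "distinct ps' \<and> set (map (\<lambda>(x,y). {x,y}) ps') = M' \<and> (\<forall>(a,b)\<in>set ps'. precedes (dl j w') a b)"
    using vps' unfolding valid_def .
  have v1: "distinct ps'" using v by (rule conjunct1)
  have v2: "set (map (\<lambda>(x,y). {x,y}) ps') = M'" using v by (elim conjE)
  have v3: "\<forall>(a,b)\<in>set ps'. precedes (dl j w') a b" using v by (elim conjE)
  have notin: "(x, w'!j) \<notin> set ps'"
  proof
    assume xin: "(x, w'!j) \<in> set ps'"
    have "precedes (dl j w') x (w'!j)" using bspec[OF v3 xin] by simp
    then have "x \<in> set (dl j w')" using precedes_in by fast
    then have "x \<in> set w'" by (rule subsetD[OF sdl])
    then show False using d by simp
  qed
  have vps: "valid (x # w') (insert {x, w'!j} M') ps"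
    unfolding valid_def
  proof (intro conjI)
    show "distinct ps" unfolding ps_def using notin v1 by simp
    show "set (map (\<lambda>(x,y). {x,y}) ps) = insert {x, w'!j} M'" unfolding ps_def using v2 by simp
    show "\<forall>(a,b)\<in>set ps. precedes (x # w') a b"
    proof
      fix p assume "p \<in> set ps"
      then consider "p = (x, w'!j)" | "p \<in> set ps'" unfolding ps_def by auto
      then show "case p of (a,b) \<Rightarrow> precedes (x # w') a b"
      proof cases
        case 1 then show ?thesis using precedes_Cons0[OF j] by simp
      next
        case 2
        obtain a b where p: "p = (a,b)" by (cases p)
        then have "precedes (dl j w') a b" using bspec[OF v3 2] by simp
        then show ?thesis using precedes_dl[OF _ j] p by simp
      qed
    qed
  qed
  have t1: "tm h (x # w') (listing (x # w') (insert {x, w'!j} M')) = tm h (x # w') ps"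
    by (rule tm_invariant[OF d Mi listing_valid[OF d Mi] vps])
  have t2: "tm h (x # w') ps = wsign (x # w') (x # w'!j # flat ps') * (h x (w'!j) * prod_list (map (\<lambda>(x,y). h x y) ps'))"
    unfolding tm_def ps_def by simp
  have t3: "wsign (x # w') (x # w'!j # flat ps') = (-1)^j * wsign (dl j w') (flat ps')"
  proof -
    have mf: "mset (flat ps') = mset (dl j w')" using valid_flat(2)[OF ddl M' vps'] .
    define A where "A = take j w'"
    define Bq where "Bq = drop (Suc j) w'"
    define y where "y = w'!j"
    have wd: "w' = A @ y # Bq" unfolding A_def Bq_def y_def by (rule id_take_nth_drop[OF j])
    have lA: "length A = j" unfolding A_def using j by simp
    have dld: "dl j w' = A @ Bq" unfolding A_def Bq_def by (simp add: dl_def)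
    have mw1: "mset (w'!j # dl j w') = mset (y # A @ Bq)" unfolding dld y_def ..
    have mw2: "mset w' = mset (A @ y # Bq)" using wd by (rule arg_cong)
    have mw: "mset (w'!j # dl j w') = mset w'" unfolding mw1 mw2 by simp
    have m1: "mset (w'!j # flat ps') = mset w'" using mf mw by simp
    have dj: "distinct (w'!j # dl j w')" using dist_mset[OF mw dw'] .
    have u1: "wsign (x # w') (x # w'!j # flat ps') = wsign w' (w'!j # flat ps')"
      by (rule wsign_shift[OF d m1])
    have u2: "wsign w' (w'!j # flat ps') = wsign w' (w'!j # dl j w') * wsign (w'!j # dl j w') (w'!j # flat ps')"
      by (rule wsign_comp[OF dw' mw m1])
    have u3: "wsign w' (w'!j # dl j w') = (-1)^j"
    proof -
      have dd: "distinct ([] @ A @ y # Bq)" using dw' unfolding wd by simp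
      have "wsign ([] @ A @ y # Bq) ([] @ y # A @ Bq) = (-1)^length A"
        by (rule wsign_move[OF dd])
      then show ?thesis unfolding dld y_def[symmetric] lA by (simp add: wd)
    qed
    have u4: "wsign (w'!j # dl j w') (w'!j # flat ps') = wsign (dl j w') (flat ps')"
      by (rule wsign_shift[OF dj mf])
    show ?thesis unfolding u1 u2 u3 u4 ..
  qed
  have t4: "tm h (dl j w') (listing (dl j w') M') = wsign (dl j w') (flat ps') * prod_list (map (\<lambda>(x,y). h x y) ps')"
    unfolding tm_def ps'_def ..
  show ?thesis unfolding t1 t2 t3 t4 by (simp only: ac_simps)
qed

lemma pm_empty: "perfect_matchings {} = {{}}"
proof
  show "perfect_matchings {} \<subseteq> {{}}"
  proof
    fix M assume M: "M \<in> perfect_matchings {}"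
    have "M = {}"
    proof (rule ccontr)
      assume "M \<noteq> {}"
      then obtain e where e: "e \<in> M" by blast
      then have "e = {}" using pm_finite_blocks[OF M e] by blast
      moreover have "card e = 2" using M e unfolding perfect_matchings_def by auto
      ultimately show False by simp
    qed
    then show "M \<in> {{}}" by simp
  qed
  show "{{}} \<subseteq> perfect_matchings {}" unfolding perfect_matchings_def by auto
qed

lemma pf_sum:
  assumes d: "distinct w" and e: "even (length w)"
  shows "pf h w = (\<Sum>M\<in>perfect_matchings (set w). tm h w (listing w M))"
proof (cases "w = []")
  case True
  have v: "valid [] {} (listing [] {})" by (rule listing_valid) (simp_all add: pm_empty)
  then have "set (listing [] {}) = ({} :: ('a \<times> 'a) set)" unfolding valid_def by auto
  then have "listing [] {} = ([] :: ('a \<times> 'a) list)" by simp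
  then show ?thesis using True by (simp add: pm_empty pf_def tm_def wsign_refl)
next
  case False
  then show ?thesis unfolding pf_def tm_def using d e by simp
qed

lemma bridge: "distinct w \<Longrightarrow> pf h w = pfr h w"
proof (induction "length w" arbitrary: w rule: less_induct)
  case less
  show ?case
  proof (cases "even (length w)")
    case False
    then have "w \<noteq> []" by auto
    then show ?thesis using False pfr_odd[OF False] unfolding pf_def by simp
  next
    case True
    show ?thesis
    proof (cases w)
      case Nil then show ?thesis by (simp add: pf_def)
    next
      case (Cons x w')
      have d: "distinct (x # w')" using less.prems Cons by simp
      have "pf h w = (\<Sum>M\<in>perfect_matchings (set (x # w')). tm h (x # w') (listing (x # w') M))"
        using pf_sum[OF less.prems True] Cons by simp
      also have "\<dots> = (\<Sum>j<length w'. \<Sum>M'\<in>perfect_matchings (set (dl j w')). tm h (x # w') (listing (x # w') (insert {x, w'!j} M')))"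
        by (rule sum_pm_split[OF d])
      also have "\<dots> = (\<Sum>j<length w'. (-1)^j * h x (w'!j) * pfr h (dl j w'))"
      proof (rule sum.cong[OF refl])
        fix j assume "j \<in> {..<length w'}"
        then have j: "j < length w'" by simp
        have ddl: "distinct (dl j w')" using d by (simp add: distinct_dl)
        have ev: "even (length (dl j w'))" using True Cons j by (simp add: length_dl)
        have "(\<Sum>M'\<in>perfect_matchings (set (dl j w')). tm h (x # w') (listing (x # w') (insert {x, w'!j} M')))
            = (\<Sum>M'\<in>perfect_matchings (set (dl j w')). (-1)^j * h x (w'!j) * tm h (dl j w') (listing (dl j w') M'))"
          by (rule sum.cong[OF refl]) (rule tm_insert[OF d j])
        also have "\<dots> = (-1)^j * h x (w'!j) * pf h (dl j w')"
          unfolding pf_sum[OF ddl ev] sum_distrib_left ..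
        also have "pf h (dl j w') = pfr h (dl j w')"
          using less.hyps[of "dl j w'"] ddl Cons j by (simp add: length_dl)
        finally show "(\<Sum>M'\<in>perfect_matchings (set (dl j w')). tm h (x # w') (listing (x # w') (insert {x, w'!j} M'))) = (-1)^j * h x (w'!j) * pfr h (dl j w')" .
      qed
      also have "\<dots> = pfr h w" unfolding Cons by (simp add: pfr.simps(2))
      finally show ?thesis .
    qed
  qed
qed


theorem mainTheorem4:
  fixes f :: "'a \<Rightarrow> 'a \<Rightarrow> 'r::comm_ring_1"
    and \<alpha> \<beta> :: "'a list" and n :: nat
  assumes antisym: "\<And>x y. f x y = - f y x"
    and diag: "\<And>x. f x x = 0"
    and dist: "distinct (\<alpha> @ \<beta>)"
    and ev: "even (length \<alpha>)"
    and len: "length \<beta> = 2 * n"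
    and n1: "n \<ge> 1"
  shows "pf f \<alpha> * pf f (\<alpha> @ \<beta>) ^ (n - 1) =
    (\<Sum>M\<in>perfect_matchings (set \<beta>).
        wsign \<beta> (flat (listing \<beta> M)) *
        prod_list (map (\<lambda>(x,y). pf f (wminus (\<alpha> @ \<beta>) [x,y])) (listing \<beta> M)))"
proof -
  interpret sk: skew f by unfold_locales (fact antisym, fact diag)
  define C where "C = \<alpha> @ \<beta>"
  define g where "g x y = pf f (wminus C [x,y])" for x y
  have dC: "distinct C" unfolding C_def by (rule dist)
  have db: "distinct \<beta>" using dist by simp
  have da: "distinct \<alpha>" using dist by simp
  have bne: "\<beta> \<noteq> []" using len n1 by auto
  have evb: "even (length \<beta>)" using len by simp
  have g_eq: "g = (\<lambda>x y. pfr f (wminus C [x,y]))"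
  proof (intro ext)
    fix x y
    have "distinct (wminus C [x,y])" unfolding wminus_def using dC by simp
    then show "g x y = pfr f (wminus C [x,y])" unfolding g_def by (rule bridge)
  qed
  have RHS: "(\<Sum>M\<in>perfect_matchings (set \<beta>).
        wsign \<beta> (flat (listing \<beta> M)) *
        prod_list (map (\<lambda>(x,y). pf f (wminus (\<alpha> @ \<beta>) [x,y])) (listing \<beta> M))) = pf g \<beta>"
    unfolding pf_def g_def C_def using bne db evb by simp
  have fb: "filter (\<lambda>z. z \<in> set \<beta>) C = \<beta>"
  proof -
    have "filter (\<lambda>z. z \<in> set \<beta>) \<alpha> = []" using dist by (auto simp: filter_empty_conv)
    moreover have "filter (\<lambda>z. z \<in> set \<beta>) \<beta> = \<beta>" by simp
    ultimately show ?thesis unfolding C_def by simp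
  qed
  have wa: "wminus C \<beta> = \<alpha>"
    unfolding wminus_def C_def using dist by (auto intro: filter_True)
  have T: "pfr f (wminus C \<beta>) * pfr f C ^ (n-1) = pfr (\<lambda>x y. pfr f (wminus C [x,y])) \<beta>"
    by (rule sk.Tthm[OF dC fb len n1])
  have "pf f \<alpha> * pf f (\<alpha> @ \<beta>) ^ (n - 1) = pfr f \<alpha> * pfr f C ^ (n - 1)"
    using bridge[OF da, of f] bridge[OF dC, of f] unfolding C_def by simp
  also have "\<dots> = pfr g \<beta>" using T unfolding wa g_eq .
  also have "\<dots> = pf g \<beta>" using bridge[OF db, of g] by simp
  finally show ?thesis unfolding RHS .
qed

end
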